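(* Let $n$ and $m$ be positive integers and $a>0$. Then \[ \int_{-a}^{1}\frac{\sin\bigl(2n\sin^{-1}\sqrt t\bigr)\sinh\bigl(2m\sinh^{-1}\sqrt{t/a}\bigr)}{\bigl\{\cos\bigl(2n\sin^{-1}\sqrt t\bigr)+\cosh\bigl(2m\sinh^{-1}\sqrt{t/a}\bigr)\bigr\}^2}\,t^j\,dt=\begin{cases}\pi/2,& j=-1,\\ 0,& j=0,1,\ldots,n+m-2.\end{cases} \]
   Context: $\cos(2n\sin^{-1}\sqrt t)=T_n(1-2t)$ and $\cosh(2m\sinh^{-1}\sqrt{t/a})=T_m(1+2t/a)$, with $T_k(\cos\theta)=\cos k\theta$ the Chebyshev polynomial of the first kind; their sum is positive on $[-a,1]$. Convention for negative arguments: for $t<0$, $\sqrt t:=i\sqrt{-t}$, $\sin^{-1}(iy):=i\sinh^{-1}y$ ($y\ge0$), $\sinh^{-1}(iy):=i\sin^{-1}y$ ($0\le y\le1$); with this convention the integrand is real. *)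

theory Defs
  imports "HOL-Analysis.Analysis"
begin

text \<open>Numerator sin(2n asin sqrt t) * sinh(2m asinh sqrt(t/a)), made real for t < 0 by the
  convention sqrt t = i sqrt(-t), asin(iy) = i asinh y, asinh(iy) = i asin y:
  then the product equals (i sinh(2n asinh sqrt(-t))) (i sin(2m asin sqrt(-t/a))).\<close>
definition numer :: "nat \<Rightarrow> nat \<Rightarrow> real \<Rightarrow> real \<Rightarrow> real" where
  "numer n m a t =
     (if 0 \<le> t then sin (2 * real n * arcsin (sqrt t)) * sinh (2 * real m * arsinh (sqrt (t / a)))
      else - (sinh (2 * real n * arsinh (sqrt (- t))) * sin (2 * real m * arcsin (sqrt (- t / a)))))"

text \<open>Denominator base cos(2n asin sqrt t) + cosh(2m asinh sqrt(t/a)), with the same convention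
  (cos(i x) = cosh x, cosh(i x) = cos x).\<close>
definition denom :: "nat \<Rightarrow> nat \<Rightarrow> real \<Rightarrow> real \<Rightarrow> real" where
  "denom n m a t =
     (if 0 \<le> t then cos (2 * real n * arcsin (sqrt t)) + cosh (2 * real m * arsinh (sqrt (t / a)))
      else cosh (2 * real n * arsinh (sqrt (- t))) + cos (2 * real m * arcsin (sqrt (- t / a))))"

end

theory Submission
  imports Defs "HOL-Complex_Analysis.Complex_Analysis"
begin


definition om :: complex where "om = (1 + \<i>) / of_real (sqrt 2)"
definition omc :: complex where "omc = (1 - \<i>) / of_real (sqrt 2)"

definition sA :: "complex \<Rightarrow> complex" where "sA t = om * csqrt (- \<i> * t)"
definition sB :: "complex \<Rightarrow> complex" where "sB t = omc * csqrt (\<i> * (1 - t))"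
definition sD :: "real \<Rightarrow> complex \<Rightarrow> complex" where
  "sD a t = om * csqrt (- \<i> * (1 + t / of_real a))"
definition sC :: "real \<Rightarrow> complex \<Rightarrow> complex" where "sC a t = sA t / of_real (sqrt a)"
definition pp :: "complex \<Rightarrow> complex" where "pp t = \<i> * sA t + sB t"
definition qq :: "real \<Rightarrow> complex \<Rightarrow> complex" where "qq a t = sC a t + sD a t"
definition EE :: "nat \<Rightarrow> nat \<Rightarrow> real \<Rightarrow> complex \<Rightarrow> complex" where
  "EE n m a t = pp t ^ (2*n) / qq a t ^ (2*m)"

lemma sqrt2c: "complex_of_real (sqrt 2) * complex_of_real (sqrt 2) = 2"
  by (simp flip: of_real_mult)

lemma om_sq: "om ^ 2 = \<i>"
  by (simp add: om_def power2_eq_square field_simps sqrt2c)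

lemma omc_sq: "omc ^ 2 = - \<i>"
  by (simp add: omc_def power2_eq_square field_simps sqrt2c)

lemma sA_sq: "sA t ^ 2 = t"
  by (simp add: sA_def power_mult_distrib om_sq)
lemma sB_sq: "sB t ^ 2 = 1 - t"
  by (simp add: sB_def power_mult_distrib omc_sq)
lemma sD_sq: "sD a t ^ 2 = 1 + t / of_real a"
  by (simp add: sD_def power_mult_distrib om_sq)
lemma sC_sq: "a > 0 \<Longrightarrow> sC a t ^ 2 = t / of_real a"
  by (simp add: sC_def power_divide sA_sq flip: of_real_power)

lemma Re_om: "Re om = 1 / sqrt 2" and Im_om: "Im om = 1 / sqrt 2"
  and Re_omc: "Re omc = 1 / sqrt 2" and Im_omc: "Im omc = - 1 / sqrt 2"
  by (simp_all add: om_def omc_def)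

lemma norm_om: "norm om = 1" and norm_omc: "norm omc = 1"
  by (simp_all add: om_def omc_def cmod_def power2_eq_square real_sqrt_divide)

lemma csqrt_Re_ge: assumes "0 \<le> Re z" shows "\<bar>Im (csqrt z)\<bar> \<le> Re (csqrt z)"
proof -
  have "Re z = Re (csqrt z)^2 - Im (csqrt z)^2"
    using Re_power2[of "csqrt z"] by (simp only: power2_csqrt)
  with assms have "Im (csqrt z)^2 \<le> Re (csqrt z)^2" by linarith
  then show ?thesis using Re_csqrt[of z] power2_le_iff_abs_le[of "Re (csqrt z)" "Im (csqrt z)"] by blast
qed

lemma csqrt_Re_gt: assumes "0 < Re z" shows "\<bar>Im (csqrt z)\<bar> < Re (csqrt z)"
proof -
  have "Re z = Re (csqrt z)^2 - Im (csqrt z)^2"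
    using Re_power2[of "csqrt z"] by (simp only: power2_csqrt)
  with assms have "Im (csqrt z)^2 < Re (csqrt z)^2" by linarith
  then show ?thesis using Re_csqrt[of z] abs_le_square_iff[of "Re (csqrt z)" "Im (csqrt z)"] abs_of_nonneg[of "Re (csqrt z)"] by linarith
qed

lemma om_mult: "Re (om * c) = (Re c - Im c) / sqrt 2" "Im (om * c) = (Re c + Im c) / sqrt 2"
  by (simp_all add: om_def field_simps)
lemma omc_mult: "Re (omc * c) = (Re c + Im c) / sqrt 2" "Im (omc * c) = (Im c - Re c) / sqrt 2"
  by (simp_all add: omc_def field_simps)

lemma om_quad: "\<bar>Im c\<bar> \<le> Re c \<Longrightarrow> 0 \<le> Re (om*c) \<and> 0 \<le> Im (om*c)"
  unfolding om_mult by (auto simp: abs_le_iff abs_less_iff intro!: divide_nonneg_pos divide_pos_pos divide_neg_pos divide_nonpos_pos)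
lemma om_quad': "\<bar>Im c\<bar> < Re c \<Longrightarrow> 0 < Re (om*c) \<and> 0 < Im (om*c)"
  unfolding om_mult by (auto simp: abs_le_iff abs_less_iff intro!: divide_nonneg_pos divide_pos_pos divide_neg_pos divide_nonpos_pos)
lemma omc_quad: "\<bar>Im c\<bar> \<le> Re c \<Longrightarrow> 0 \<le> Re (omc*c) \<and> Im (omc*c) \<le> 0"
  unfolding omc_mult by (auto simp: abs_le_iff abs_less_iff intro!: divide_nonneg_pos divide_pos_pos divide_neg_pos divide_nonpos_pos)
lemma omc_quad': "\<bar>Im c\<bar> < Re c \<Longrightarrow> 0 < Re (omc*c) \<and> Im (omc*c) < 0"
  unfolding omc_mult by (auto simp: abs_le_iff abs_less_iff intro!: divide_nonneg_pos divide_pos_pos divide_neg_pos divide_nonpos_pos)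

lemma sA_quad: assumes "0 \<le> Im t" shows "0 \<le> Re (sA t)" "0 \<le> Im (sA t)"
  using om_quad[OF csqrt_Re_ge[of "- \<i> * t"]] assms unfolding sA_def by auto
lemma sA_quad': assumes "0 < Im t" shows "0 < Re (sA t)" "0 < Im (sA t)"
  using om_quad'[OF csqrt_Re_gt[of "- \<i> * t"]] assms unfolding sA_def by auto
lemma sB_quad: assumes "0 \<le> Im t" shows "0 \<le> Re (sB t)" "Im (sB t) \<le> 0"
  using omc_quad[OF csqrt_Re_ge[of "\<i> * (1 - t)"]] assms unfolding sB_def by auto
lemma sB_quad': assumes "0 < Im t" shows "0 < Re (sB t)" "Im (sB t) < 0"
  using omc_quad'[OF csqrt_Re_gt[of "\<i> * (1 - t)"]] assms unfolding sB_def by auto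
lemma sD_quad: assumes "0 \<le> Im t" "0 < a" shows "0 \<le> Re (sD a t)" "0 \<le> Im (sD a t)"
  using om_quad[OF csqrt_Re_ge[of "- \<i> * (1 + t / of_real a)"]] assms unfolding sD_def by auto
lemma sC_quad: assumes "0 \<le> Im t" "0 < a" shows "0 \<le> Re (sC a t)" "0 \<le> Im (sC a t)"
  using sA_quad[OF assms(1)] assms(2) by (auto simp: sC_def)

lemma pp_inv: "pp t * (sB t - \<i> * sA t) = 1"
proof -
  have "pp t * (sB t - \<i> * sA t) = sB t ^ 2 + sA t ^ 2"
    by (simp add: pp_def power2_eq_square algebra_simps)
  also have "\<dots> = 1" by (simp add: sA_sq sB_sq)
  finally show ?thesis .
qed

lemma qq_inv: assumes "0 < a" shows "qq a t * (sD a t - sC a t) = 1"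
proof -
  have "qq a t * (sD a t - sC a t) = sD a t ^ 2 - sC a t ^ 2"
    by (simp add: qq_def power2_eq_square algebra_simps)
  also have "\<dots> = 1" using assms by (simp add: sD_sq sC_sq)
  finally show ?thesis .
qed

lemma norm_sq_eq: "cmod z ^ 2 = Re z ^ 2 + Im z ^ 2"
  by (simp add: cmod_def)

lemma pp_le1: assumes "0 \<le> Im t" shows "cmod (pp t) \<le> 1"
proof -
  define p' where "p' = sB t - \<i> * sA t"
  have d: "cmod p' ^ 2 - cmod (pp t) ^ 2 = 4 * (Re (sB t) * Im (sA t) - Im (sB t) * Re (sA t))"
    unfolding norm_sq_eq p'_def pp_def by (simp add: power2_eq_square algebra_simps)
  have "0 \<le> Re (sB t) * Im (sA t) - Im (sB t) * Re (sA t)"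
    using sA_quad[OF assms] sB_quad[OF assms]
    by (smt (verit) mult_nonneg_nonneg mult_nonpos_nonneg)
  with d have "cmod (pp t) ^ 2 \<le> cmod p' ^ 2" by (smt (verit))
  hence le: "cmod (pp t) \<le> cmod p'" using power2_le_iff_abs_le[of "cmod p'" "cmod (pp t)"] by simp
  have one: "cmod (pp t) * cmod p' = 1" using pp_inv[of t] unfolding p'_def by (metis norm_mult norm_one)
  have "cmod (pp t) ^ 2 \<le> cmod (pp t) * cmod p'" using le by (simp add: power2_eq_square mult_left_mono)
  hence "cmod (pp t) ^ 2 \<le> 1" using one by simp
  thus ?thesis using abs_square_le_1[of "cmod (pp t)"] by simp
qed

lemma pp_lt1: assumes "0 < Im t" shows "cmod (pp t) < 1"
proof -
  define p' where "p' = sB t - \<i> * sA t"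
  have d: "cmod p' ^ 2 - cmod (pp t) ^ 2 = 4 * (Re (sB t) * Im (sA t) - Im (sB t) * Re (sA t))"
    unfolding norm_sq_eq p'_def pp_def by (simp add: power2_eq_square algebra_simps)
  have "0 < Re (sB t) * Im (sA t) - Im (sB t) * Re (sA t)"
    using sA_quad'[OF assms] sB_quad'[OF assms]
    by (smt (verit) mult_pos_pos mult_neg_pos)
  with d have "cmod (pp t) ^ 2 < cmod p' ^ 2" by (smt (verit))
  hence le: "cmod (pp t) < cmod p'" using power_less_imp_less_base[of "cmod (pp t)" 2 "cmod p'"] by simp
  have one: "cmod (pp t) * cmod p' = 1" using pp_inv[of t] unfolding p'_def by (metis norm_mult norm_one)
  have "pp t \<noteq> 0" using pp_inv[of t] by auto
  hence "cmod (pp t) ^ 2 < cmod (pp t) * cmod p'" using le by (simp add: power2_eq_square mult_strict_left_mono)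
  hence "cmod (pp t) ^ 2 < 1" using one by simp
  thus ?thesis using abs_square_less_1[of "cmod (pp t)"] by simp
qed

lemma qq_ge1: assumes "0 \<le> Im t" "0 < a" shows "1 \<le> cmod (qq a t)"
proof -
  define q' where "q' = sD a t - sC a t"
  have d: "cmod (qq a t) ^ 2 - cmod q' ^ 2 = 4 * (Re (sC a t) * Re (sD a t) + Im (sC a t) * Im (sD a t))"
    unfolding norm_sq_eq q'_def qq_def by (simp add: power2_eq_square algebra_simps)
  have "0 \<le> Re (sC a t) * Re (sD a t) + Im (sC a t) * Im (sD a t)"
    using sC_quad[OF assms] sD_quad[OF assms] by simp
  with d have "cmod q' ^ 2 \<le> cmod (qq a t) ^ 2" by (smt (verit))
  hence le: "cmod q' \<le> cmod (qq a t)" using power2_le_iff_abs_le[of "cmod (qq a t)" "cmod q'"] by simp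
  have one: "cmod (qq a t) * cmod q' = 1" using qq_inv[OF assms(2), of t] unfolding q'_def by (metis norm_mult norm_one)
  have "1 \<le> cmod (qq a t) * cmod (qq a t)" using le one by (metis mult_left_mono norm_ge_zero)
  thus ?thesis using abs_square_less_1[of "cmod (qq a t)"] by (auto simp: power2_eq_square)
qed



lemma om_omc: "om * omc = 1"
  by (simp add: om_def omc_def field_simps sqrt2c)

lemma csqrt_mi: assumes "0 \<le> r" shows "csqrt (- \<i> * of_real r) = of_real (sqrt r) * omc"
proof (rule csqrt_unique)
  show "(of_real (sqrt r) * omc)\<^sup>2 = - \<i> * of_real r"
    using assms by (simp add: power_mult_distrib omc_sq flip: of_real_power)
  show "0 < Re (of_real (sqrt r) * omc) \<or> Re (of_real (sqrt r) * omc) = 0 \<and> 0 \<le> Im (of_real (sqrt r) * omc)"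
    using assms by (cases "r = 0") (auto simp: omc_def)
qed

lemma csqrt_pi: assumes "0 \<le> r" shows "csqrt (\<i> * of_real r) = of_real (sqrt r) * om"
proof (rule csqrt_unique)
  show "(of_real (sqrt r) * om)\<^sup>2 = \<i> * of_real r"
    using assms by (simp add: power_mult_distrib om_sq flip: of_real_power)
  show "0 < Re (of_real (sqrt r) * om) \<or> Re (of_real (sqrt r) * om) = 0 \<and> 0 \<le> Im (of_real (sqrt r) * om)"
    using assms by (cases "r = 0") (auto simp: om_def)
qed

lemma sA_pos: "0 \<le> x \<Longrightarrow> sA (of_real x) = of_real (sqrt x)"
  unfolding sA_def using csqrt_mi[of x] om_omc by (simp add: mult.left_commute)
lemma sA_neg: "x \<le> 0 \<Longrightarrow> sA (of_real x) = \<i> * of_real (sqrt (-x))"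
proof -
  assume "x \<le> 0"
  have "- \<i> * of_real x = \<i> * of_real (-x)" by simp
  hence "sA (of_real x) = om * (of_real (sqrt (-x)) * om)" unfolding sA_def using csqrt_pi[of "-x"] \<open>x \<le> 0\<close> by simp
  also have "\<dots> = of_real (sqrt (-x)) * om ^ 2" by (simp add: power2_eq_square)
  finally show ?thesis by (simp add: om_sq)
qed
lemma sB_le1: "x \<le> 1 \<Longrightarrow> sB (of_real x) = of_real (sqrt (1 - x))"
proof -
  assume "x \<le> 1"
  have "\<i> * (1 - of_real x) = \<i> * of_real (1 - x)" by simp
  hence "sB (of_real x) = omc * (of_real (sqrt (1 - x)) * om)" unfolding sB_def using csqrt_pi[of "1 - x"] \<open>x \<le> 1\<close> by simp
  thus ?thesis using om_omc by (simp add: mult.left_commute mult.commute)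
qed
lemma sB_ge1: "1 \<le> x \<Longrightarrow> sB (of_real x) = - \<i> * of_real (sqrt (x - 1))"
proof -
  assume "1 \<le> x"
  have "\<i> * (1 - of_real x) = - \<i> * of_real (x - 1)" by (simp add: algebra_simps)
  hence "sB (of_real x) = omc * (of_real (sqrt (x - 1)) * omc)" unfolding sB_def using csqrt_mi[of "x - 1"] \<open>1 \<le> x\<close> by simp
  also have "\<dots> = of_real (sqrt (x - 1)) * omc ^ 2" by (simp add: power2_eq_square)
  finally show ?thesis by (simp add: omc_sq)
qed
lemma sD_ge: "0 < a \<Longrightarrow> -a \<le> x \<Longrightarrow> sD a (of_real x) = of_real (sqrt (1 + x / a))"
proof -
  assume a: "0 < a" "-a \<le> x"
  hence r: "0 \<le> 1 + x / a" by (simp add: field_simps)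
  have "- \<i> * (1 + of_real x / of_real a) = - \<i> * of_real (1 + x / a)" by simp
  hence "sD a (of_real x) = om * (of_real (sqrt (1 + x / a)) * omc)" unfolding sD_def using csqrt_mi[OF r] by simp
  thus ?thesis using om_omc by (simp add: mult.left_commute)
qed
lemma sD_le: "0 < a \<Longrightarrow> x \<le> -a \<Longrightarrow> sD a (of_real x) = \<i> * of_real (sqrt (- (1 + x / a)))"
proof -
  assume a: "0 < a" "x \<le> -a"
  hence r: "0 \<le> - (1 + x / a)" by (simp add: field_simps)
  have "- \<i> * (1 + of_real x / of_real a) = \<i> * of_real (- (1 + x / a))" by (simp add: algebra_simps)
  hence "sD a (of_real x) = om * (of_real (sqrt (- (1 + x / a))) * om)" unfolding sD_def using csqrt_pi[OF r] by simp
  also have "\<dots> = of_real (sqrt (- (1 + x / a))) * om ^ 2" by (simp add: power2_eq_square)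
  finally show ?thesis by (simp add: om_sq)
qed

lemma cosh_gt1: "0 < (y::real) \<Longrightarrow> 1 < cosh y"
proof -
  assume y: "0 < y"
  have "0 < sinh y" using y by simp
  hence "1 < cosh y ^ 2" using cosh_square_eq[of y] by (simp add: power2_eq_square)
  thus ?thesis using cosh_real_ge_1[of y] by (smt (verit) one_le_power power_le_one)
qed

lemma key_alg:
  fixes c s e u :: real
  assumes "e * u = 1" "c^2 + s^2 = 1"
  shows "(e * c + 1) * (- ((u - e) / 2)) - (e * s) * s = (e * c - 1) * (c + (u + e) / 2)"
    and "(e * c + 1) * s + (e * s) * (- ((u - e) / 2)) = (e * s) * (c + (u + e) / 2)"
  using assms by algebra+

lemma key_trig:
  fixes X Y :: real and E :: complex
  assumes E: "E = cis X * of_real (exp (- Y))" and D: "cos X + cosh Y \<noteq> 0"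
  shows "E + 1 \<noteq> 0" "Im (- ((E - 1) / (E + 1))\<^sup>2) = 2 * sin X * sinh Y / (cos X + cosh Y)\<^sup>2"
proof -
  define e where "e = exp (- Y)"
  define u where "u = exp Y"
  have eu: "e * u = 1" unfolding e_def u_def by (simp add: exp_minus)
  have ch: "cosh Y = (u + e) / 2" and sh: "sinh Y = (u - e) / 2"
    unfolding cosh_def sinh_def u_def e_def by (simp_all add: exp_minus)
  define w where "w = Complex (- sinh Y) (sin X) / of_real (cos X + cosh Y)"
  have cs: "cos X ^ 2 + sin X ^ 2 = 1" by simp
  have E2: "E = Complex (e * cos X) (e * sin X)" unfolding E e_def by (simp add: complex_eq_iff)
  have eq: "(E + 1) * Complex (- sinh Y) (sin X) = (E - 1) * of_real (cos X + cosh Y)"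
    unfolding complex_eq_iff E2 ch sh using key_alg[OF eu cs] by simp
  show ne: "E + 1 \<noteq> 0"
  proof
    assume "E + 1 = 0"
    hence "E = -1" using eq_neg_iff_add_eq_0[of E 1] by simp
    hence E1: "E - 1 = -2" by simp
    have "(E + 1) * Complex (- sinh Y) (sin X) = 0" using \<open>E + 1 = 0\<close> by (simp only: mult_zero_left)
    hence "(E - 1) * of_real (cos X + cosh Y) = 0" using eq by metis
    hence "of_real (cos X + cosh Y) = (0::complex)" unfolding E1 by (simp only: mult_eq_0_iff) simp
    with D show False by (simp only: of_real_eq_0_iff)
  qed
  have D': "complex_of_real (cos X + cosh Y) \<noteq> 0" using D by (simp only: of_real_eq_0_iff) simp
  have "(E - 1) / (E + 1) = w" unfolding w_def using eq ne D'
    by (subst frac_eq_eq) (auto simp: mult.commute)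
  hence "Im (- ((E - 1) / (E + 1))\<^sup>2) = - Im (w ^ 2)" by simp
  also have "\<dots> = 2 * sin X * sinh Y / (cos X + cosh Y)\<^sup>2"
    unfolding w_def by (simp add: power2_eq_square Im_divide_of_real field_simps)
  finally show "Im (- ((E - 1) / (E + 1))\<^sup>2) = 2 * sin X * sinh Y / (cos X + cosh Y)\<^sup>2" .
qed



lemma exp_arsinh_real: "exp (arsinh (y::real)) = y + sqrt (y^2 + 1)"
  using arsinh_real_aux[of y] by (simp add: arsinh_real_def)

lemma exp_neg_arsinh_real: "exp (- arsinh (y::real)) = sqrt (y^2 + 1) - y"
proof -
  have "(y + sqrt (y^2 + 1)) * (sqrt (y^2 + 1) - y) = 1"
    by (simp add: algebra_simps power2_eq_square)
  moreover have "0 < y + sqrt (y^2 + 1)" by (rule arsinh_real_aux)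
  ultimately show ?thesis by (simp add: exp_minus exp_arsinh_real field_simps)
qed

lemma cis_sqrt: assumes "0 \<le> y" "y \<le> 1"
  shows "cis (arcsin y) = of_real (sqrt (1 - y^2)) + \<i> * of_real y"
  using assms by (simp add: complex_eq_iff cos_arcsin)

lemma EE_reg1:
  assumes a: "0 < a" and x: "0 \<le> x" "x \<le> 1"
  shows "EE n m a (of_real x) = cis (2 * real n * arcsin (sqrt x)) * of_real (exp (- (2 * real m * arsinh (sqrt (x / a)))))"
proof -
  define th where "th = arcsin (sqrt x)"
  define ps where "ps = arsinh (sqrt (x / a))"
  have "pp (of_real x) = cis th"
    unfolding pp_def th_def using x by (simp add: sA_pos sB_le1 cis_sqrt real_sqrt_le_1_iff)
  hence P: "pp (of_real x) ^ (2*n) = cis (2 * real n * th)" using Complex.DeMoivre[of th "2*n"] by (simp add: mult.assoc)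
  have "qq a (of_real x) = of_real (exp ps)"
    unfolding qq_def sC_def ps_def exp_arsinh_real using x a
    by (simp add: sA_pos sD_ge real_sqrt_divide field_simps)
  hence Q: "qq a (of_real x) ^ (2*m) = of_real (exp (2 * real m * ps))"
    by (simp add: exp_of_nat_mult[symmetric] mult.assoc flip: of_real_power)
  show ?thesis unfolding EE_def P Q th_def[symmetric] ps_def[symmetric]
    by (simp add: exp_minus divide_inverse flip: of_real_inverse)
qed

lemma EE_reg2:
  assumes a: "0 < a" and x: "-a \<le> x" "x \<le> 0"
  shows "EE n m a (of_real x) = cis (- (2 * real m * arcsin (sqrt (- x / a)))) * of_real (exp (- (2 * real n * arsinh (sqrt (- x)))))"
proof -
  define ch where "ch = arcsin (sqrt (- x / a))"
  define ph where "ph = arsinh (sqrt (- x))"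
  have xa: "- x / a \<le> 1" using a x by (simp add: field_simps)
  have "pp (of_real x) = of_real (exp (- ph))"
    unfolding pp_def ph_def exp_neg_arsinh_real using x by (simp add: sA_neg sB_le1)
  hence P: "pp (of_real x) ^ (2*n) = of_real (exp (- (2 * real n * ph)))"
    by (simp add: exp_of_nat_mult[symmetric] flip: of_real_power)
  have nn: "0 \<le> - x / a" using a x divide_nonneg_pos[of "-x" a] by linarith
  have hh2: "sqrt (- (x / a)) = sqrt (-x) / sqrt a" using real_sqrt_divide[of "-x" a] by simp
  have c1: "sqrt (1 - (sqrt (- x / a))^2) = sqrt (1 + x / a)" using nn by simp
  have "qq a (of_real x) = of_real (sqrt (1 + x/a)) + \<i> * of_real (sqrt (-x/a))"
    unfolding qq_def sC_def using a x hh2 by (simp add: sA_neg sD_ge)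
  also have "\<dots> = cis ch" unfolding ch_def
    using cis_sqrt[of "sqrt (- x / a)"] nn xa c1 by (simp add: real_sqrt_le_1_iff)
  finally have "qq a (of_real x) = cis ch" .
  hence Q: "qq a (of_real x) ^ (2*m) = cis (2 * real m * ch)" using Complex.DeMoivre[of ch "2*m"] by (simp add: mult.assoc)
  show ?thesis unfolding EE_def P Q ch_def[symmetric] ph_def[symmetric]
    by (simp add: divide_inverse mult.commute)
qed



definition MM :: "nat \<Rightarrow> nat \<Rightarrow> real \<Rightarrow> complex \<Rightarrow> complex" where
  "MM n m a t = ((\<i> - sA t / (sB t + 1)) * (\<Sum>i<2*n. pp t ^ i)
     - (1 / of_real (sqrt a) + sA t / (of_real a * (sD a t + 1))) * (\<Sum>i<2*m. qq a t ^ i)) / qq a t ^ (2*m)"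

definition GG :: "nat \<Rightarrow> nat \<Rightarrow> real \<Rightarrow> nat \<Rightarrow> complex \<Rightarrow> complex" where
  "GG n m a k t = - ((MM n m a t) ^ 2 * t ^ k / (EE n m a t + 1) ^ 2)"

lemma sB1_ne: "0 \<le> Im t \<Longrightarrow> sB t + 1 \<noteq> 0"
  using sB_quad(1)[of t] by (auto simp: complex_eq_iff)
lemma sD1_ne: "0 \<le> Im t \<Longrightarrow> 0 < a \<Longrightarrow> sD a t + 1 \<noteq> 0"
  using sD_quad(1)[of t a] by (auto simp: complex_eq_iff)
lemma qq_ne: "0 \<le> Im t \<Longrightarrow> 0 < a \<Longrightarrow> qq a t \<noteq> 0"
  using qq_ge1[of t a] by auto

lemma pm1: assumes "0 \<le> Im t" shows "pp t - 1 = sA t * (\<i> - sA t / (sB t + 1))"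
proof -
  have ne: "sB t + 1 \<noteq> 0" using sB1_ne[OF assms] .
  have "sB t - 1 = (sB t ^ 2 - 1) / (sB t + 1)" using ne by (simp add: field_simps power2_eq_square)
  also have "\<dots> = - (sA t * sA t) / (sB t + 1)" by (simp add: sB_sq sA_sq[of t, unfolded power2_eq_square])
  finally have "sB t - 1 = - (sA t * sA t) / (sB t + 1)" .
  thus ?thesis unfolding pp_def by (simp add: algebra_simps)
qed

lemma qm1: assumes "0 \<le> Im t" "0 < a" shows "qq a t - 1 = sA t * (1 / of_real (sqrt a) + sA t / (of_real a * (sD a t + 1)))"
proof -
  have ne: "sD a t + 1 \<noteq> 0" using sD1_ne[OF assms] .
  have an: "complex_of_real a \<noteq> 0" using assms by simp
  have "sD a t - 1 = (sD a t ^ 2 - 1) / (sD a t + 1)" using ne by (simp add: field_simps power2_eq_square)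
  also have "\<dots> = (sA t * sA t) / (of_real a * (sD a t + 1))" using an ne
    by (simp add: sD_sq sA_sq[of t, unfolded power2_eq_square] field_simps)
  finally have "sD a t - 1 = (sA t * sA t) / (of_real a * (sD a t + 1))" .
  thus ?thesis unfolding qq_def sC_def by (simp add: algebra_simps)
qed

lemma MM_eq: assumes "0 \<le> Im t" "0 < a" shows "sA t * MM n m a t = EE n m a t - 1"
proof -
  have qn: "qq a t ^ (2*m) \<noteq> 0" using qq_ne[OF assms] by simp
  have "EE n m a t - 1 = ((pp t ^ (2*n) - 1) - (qq a t ^ (2*m) - 1)) / qq a t ^ (2*m)"
    unfolding EE_def using qn by (simp add: field_simps)
  also have "\<dots> = ((pp t - 1) * (\<Sum>i<2*n. pp t ^ i) - (qq a t - 1) * (\<Sum>i<2*m. qq a t ^ i)) / qq a t ^ (2*m)"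
    by (simp only: power_diff_1_eq)
  also have "\<dots> = sA t * MM n m a t"
    unfolding pm1[OF assms(1)] qm1[OF assms] MM_def by (simp add: algebra_simps)
  finally show ?thesis by simp
qed

lemma GG_eq: assumes "0 \<le> Im t" "0 < a" "t \<noteq> 0"
  shows "GG n m a k t = - (((EE n m a t - 1) / (EE n m a t + 1)) ^ 2 * (t ^ k / t))"
proof -
  have sa: "sA t \<noteq> 0" using sA_sq[of t] assms(3) by auto
  have "MM n m a t = (EE n m a t - 1) / sA t" using MM_eq[OF assms(1,2)] sa by (simp add: field_simps)
  hence M2: "(MM n m a t)^2 = (EE n m a t - 1)^2 / t" by (simp add: power_divide sA_sq)
  show ?thesis
  proof (cases "EE n m a t + 1 = 0")
    case True thus ?thesis unfolding GG_def by simp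
  next
    case False
    thus ?thesis unfolding GG_def M2 using assms(3) by (simp add: field_simps power2_eq_square)
  qed
qed



lemma EE_norm: "cmod (EE n m a t) = cmod (pp t) ^ (2*n) / cmod (qq a t) ^ (2*m)"
  by (simp add: EE_def norm_divide norm_power)

lemma frac_lt1: fixes p q :: real
  assumes "0 \<le> p" "p < 1" "1 \<le> q" "0 < k" shows "p ^ k / q ^ l < 1"
proof -
  have "p ^ k < 1" using assms by (simp add: power_less_one_iff)
  moreover have "1 \<le> q ^ l" using assms by simp
  moreover have "p ^ k / q ^ l \<le> p ^ k / 1"
    using \<open>1 \<le> q ^ l\<close> assms(1) by (intro divide_left_mono) auto
  ultimately show ?thesis by simp
qed

lemma frac_lt1': fixes p q :: real
  assumes "0 \<le> p" "p \<le> 1" "1 < q" "0 < l" shows "p ^ k / q ^ l < 1"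
proof -
  have "p ^ k \<le> 1" using assms by (simp add: power_le_one)
  moreover have "1 < q ^ l" using assms by (simp add: one_less_power)
  ultimately show ?thesis by (simp add: divide_less_eq)
qed

lemma EE_lt1_int: assumes "0 < Im t" "0 < a" "0 < n" shows "cmod (EE n m a t) < 1"
  unfolding EE_norm using pp_lt1[OF assms(1)] qq_ge1[of t a] assms by (intro frac_lt1) auto

lemma EE_reg3: assumes a: "0 < a" and x: "1 \<le> x" and m: "0 < m"
  shows "EE n m a (of_real x) \<in> \<real>" "cmod (EE n m a (of_real x)) < 1"
proof -
  define r where "r = sqrt x - sqrt (x - 1)"
  have P: "pp (of_real x) = \<i> * of_real r" unfolding pp_def r_def using x
    by (simp add: sA_pos sB_ge1 algebra_simps)
  have "pp (of_real x) ^ (2*n) = (- of_real (r^2)) ^ n"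
    unfolding power_mult P by (simp add: power_mult_distrib)
  hence Pr: "pp (of_real x) ^ (2*n) \<in> \<real>" by simp
  define s where "s = sqrt x / sqrt a + sqrt (1 + x / a)"
  have Q: "qq a (of_real x) = of_real s" unfolding qq_def sC_def s_def using a x
    by (simp add: sA_pos sD_ge)
  show "EE n m a (of_real x) \<in> \<real>" unfolding EE_def using Pr Q by simp
  have "0 < sqrt x / sqrt a" using a x by simp
  moreover have "1 \<le> sqrt (1 + x / a)" using a x by simp
  ultimately have s1: "1 < s" unfolding s_def by linarith
  show "cmod (EE n m a (of_real x)) < 1" unfolding EE_norm Q
    using pp_le1[of "of_real x"] s1 m by (intro frac_lt1') auto
qed

lemma EE_reg4: assumes a: "0 < a" and x: "x \<le> -a" and n: "0 < n"
  shows "EE n m a (of_real x) \<in> \<real>" "cmod (EE n m a (of_real x)) < 1"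
proof -
  define r where "r = sqrt (1 - x) - sqrt (- x)"
  have P: "pp (of_real x) = of_real r" unfolding pp_def r_def using x a
    by (simp add: sA_neg sB_le1)
  define s where "s = sqrt (- x) / sqrt a + sqrt (- (1 + x / a))"
  have Q: "qq a (of_real x) = \<i> * of_real s" unfolding qq_def sC_def s_def using a x
    by (simp add: sA_neg sD_le algebra_simps)
  have "qq a (of_real x) ^ (2*m) = (- of_real (s^2)) ^ m"
    unfolding power_mult Q by (simp add: power_mult_distrib)
  hence Qr: "qq a (of_real x) ^ (2*m) \<in> \<real>" by simp
  show "EE n m a (of_real x) \<in> \<real>" unfolding EE_def using Qr P by simp
  have x0: "0 < -x" using a x by simp
  have r0: "0 \<le> r" unfolding r_def by simp
  have "sqrt (1 - x) < 1 + sqrt (- x)"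
  proof -
    have "(sqrt (1 - x))^2 < (1 + sqrt (- x))^2" using x0 by (simp add: power2_eq_square algebra_simps)
    moreover have "0 \<le> 1 + sqrt (- x)" using x0 by simp
    ultimately show ?thesis by (rule power_less_imp_less_base)
  qed
  hence r1: "r < 1" unfolding r_def by simp
  show "cmod (EE n m a (of_real x)) < 1" unfolding EE_norm P
    using qq_ge1[of "of_real x" a] a r0 r1 n by (intro frac_lt1) auto
qed

lemma cos_cosh_pos: "0 < Y \<or> X = 0 \<Longrightarrow> 0 < cos X + cosh (Y::real)"
proof -
  assume h: "0 < Y \<or> X = 0"
  have c: "-1 \<le> cos X" by simp
  have d: "1 \<le> cosh Y" by (rule cosh_real_ge_1)
  from h show ?thesis
  proof
    assume "0 < Y" thus ?thesis using cosh_gt1[of Y] c by linarith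
  next
    assume "X = 0" thus ?thesis using d by simp
  qed
qed

lemma EE_ne: assumes "0 \<le> Im t" "0 < a" "0 < n" "0 < m"
  shows "EE n m a t + 1 \<noteq> 0"
proof -
  have lt: "cmod z < 1 \<Longrightarrow> z + 1 \<noteq> 0" for z :: complex
    by (metis add.inverse_unique norm_minus_cancel norm_one order_less_irrefl add.commute)
  show ?thesis
  proof (cases "0 < Im t")
    case True thus ?thesis using lt EE_lt1_int assms by blast
  next
    case False
    hence t: "t = of_real (Re t)" using assms(1) by (simp add: complex_eq_iff)
    define x where "x = Re t"
    consider "1 \<le> x" | "x \<le> -a" | "0 \<le> x" "x \<le> 1" | "-a \<le> x" "x \<le> 0" by linarith
    thus ?thesis
    proof cases
      case 1 thus ?thesis using t EE_reg3(2)[OF assms(2) 1 assms(4)] lt x_def by metis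
    next
      case 2 thus ?thesis using t EE_reg4(2)[OF assms(2) 2 assms(3)] lt x_def by metis
    next
      case 3
      have "0 < cos (2 * real n * arcsin (sqrt x)) + cosh (2 * real m * arsinh (sqrt (x / a)))"
        using 3 assms by (intro cos_cosh_pos) (cases "x = 0"; auto)
      thus ?thesis using key_trig(1)[OF EE_reg1[OF assms(2) 3, of n m]] t x_def by (metis less_irrefl)
    next
      case 4
      have "0 < cos (- (2 * real m * arcsin (sqrt (- x / a)))) + cosh (2 * real n * arsinh (sqrt (- x)))"
        using 4 assms by (intro cos_cosh_pos) (cases "x = 0"; auto)
      thus ?thesis using key_trig(1)[OF EE_reg2[OF assms(2) 4, of n m]] t x_def by (metis less_irrefl)
    qed
  qed
qed



lemma GG_real: assumes "0 < a" "x \<noteq> 0"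
  shows "GG n m a k (of_real x) = - (((EE n m a (of_real x) - 1) / (EE n m a (of_real x) + 1)) ^ 2) * of_real (x ^ k / x)"
  using GG_eq[of "of_real x" a n m k] assms by simp

lemma ImGG_seg: assumes a: "0 < a" and n: "0 < n" and m: "0 < m" and x: "-a \<le> x" "x \<le> 1" "x \<noteq> 0"
  shows "Im (GG n m a k (of_real x)) = 2 * (numer n m a x / (denom n m a x)^2) * (x ^ k / x)"
proof -
  have "Im (GG n m a k (of_real x)) = Im (- (((EE n m a (of_real x) - 1) / (EE n m a (of_real x) + 1)) ^ 2)) * (x ^ k / x)"
    unfolding GG_real[OF a x(3)] by simp
  also have "Im (- (((EE n m a (of_real x) - 1) / (EE n m a (of_real x) + 1)) ^ 2)) = 2 * (numer n m a x / (denom n m a x)^2)"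
  proof (cases "0 < x")
    case True
    define X where "X = 2 * real n * arcsin (sqrt x)"
    define Y where "Y = 2 * real m * arsinh (sqrt (x / a))"
    have E: "EE n m a (of_real x) = cis X * of_real (exp (- Y))"
      unfolding X_def Y_def using EE_reg1[OF a, of x n m] True x by simp
    have Y0: "0 < Y" unfolding Y_def using True a m by simp
    have D: "0 < cos X + cosh Y" by (rule cos_cosh_pos) (simp add: Y0)
    have "Im (- (((EE n m a (of_real x) - 1) / (EE n m a (of_real x) + 1)) ^ 2)) = 2 * sin X * sinh Y / (cos X + cosh Y)\<^sup>2"
      using key_trig(2)[OF E] D by simp
    moreover have "numer n m a x = sin X * sinh Y" "denom n m a x = cos X + cosh Y"
      unfolding numer_def denom_def X_def Y_def using True by auto
    ultimately show ?thesis by simp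
  next
    case False
    hence x0: "x < 0" using x(3) by simp
    define C where "C = 2 * real m * arcsin (sqrt (- x / a))"
    define Y where "Y = 2 * real n * arsinh (sqrt (- x))"
    have E: "EE n m a (of_real x) = cis (- C) * of_real (exp (- Y))"
      unfolding C_def Y_def using EE_reg2[OF a, of x n m] x0 x by simp
    have Y0: "0 < Y" unfolding Y_def using x0 n by simp
    have D: "0 < cos (- C) + cosh Y" by (rule cos_cosh_pos) (simp add: Y0)
    have "Im (- (((EE n m a (of_real x) - 1) / (EE n m a (of_real x) + 1)) ^ 2)) = 2 * sin (- C) * sinh Y / (cos (- C) + cosh Y)\<^sup>2"
      using key_trig(2)[OF E] D by simp
    moreover have "numer n m a x = - (sinh Y * sin C)" "denom n m a x = cosh Y + cos C"
      unfolding numer_def denom_def C_def Y_def using x0 by auto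
    ultimately show ?thesis by (simp add: add.commute)
  qed
  finally show ?thesis .
qed

lemma ImGG_out: assumes a: "0 < a" and n: "0 < n" and m: "0 < m" and x: "1 \<le> x \<or> x \<le> -a"
  shows "Im (GG n m a k (of_real x)) = 0"
proof -
  have x0: "x \<noteq> 0" using x a by auto
  have "EE n m a (of_real x) \<in> \<real>" using x EE_reg3(1)[OF a _ m] EE_reg4(1)[OF a _ n] by blast
  hence "GG n m a k (of_real x) \<in> \<real>" unfolding GG_real[OF a x0] by simp
  thus ?thesis by (simp add: complex_is_Real_iff)
qed

lemma powi_eq: "(x::real) \<noteq> 0 \<Longrightarrow> x powi (int k - 1) = x ^ k / x"
  by (simp add: power_int_diff)



abbreviation UH :: "complex set" where "UH \<equiv> {z. 0 \<le> Im z}"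
abbreviation OH :: "complex set" where "OH \<equiv> {z. 0 < Im z}"

lemma csqrt_cont_rhp: "continuous_on {z. 0 \<le> Re z} csqrt"
proof (rule continuous_at_imp_continuous_on, safe)
  fix z :: complex assume z: "0 \<le> Re z"
  show "isCont csqrt z"
  proof (cases "z = 0")
    case True
    have "((\<lambda>w. norm (csqrt w)) \<longlongrightarrow> 0) (at 0)"
    proof -
      have "isCont (\<lambda>w::complex. sqrt (norm w)) 0" by (intro continuous_intros)
      thus ?thesis by (simp add: isCont_def)
    qed
    hence "(csqrt \<longlongrightarrow> 0) (at 0)" using tendsto_norm_zero_iff[of csqrt "at (0::complex)"] by simp
    thus ?thesis using True by (simp add: isCont_def)
  next
    case False
    hence "z \<notin> \<real>\<^sub>\<le>\<^sub>0" using z by (auto simp: complex_nonpos_Reals_iff complex_eq_iff)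
    thus ?thesis by (rule continuous_at_csqrt)
  qed
qed

lemma cont_csqrt_lin: assumes "\<And>z. z \<in> S \<Longrightarrow> 0 \<le> Re (f z)" "continuous_on S f"
  shows "continuous_on S (\<lambda>z. csqrt (f z))"
  using continuous_on_compose2[OF csqrt_cont_rhp assms(2)] assms(1) by auto

lemma hol_csqrt_lin: assumes "\<And>z. z \<in> S \<Longrightarrow> 0 < Re (f z)" "f holomorphic_on S"
  shows "(\<lambda>z. csqrt (f z)) holomorphic_on S"
  by (rule holomorphic_on_csqrt'[OF assms(2)]) (use assms(1) in \<open>fastforce simp: complex_nonpos_Reals_iff\<close>)

lemma cont_sA: "continuous_on UH sA"
  unfolding sA_def by (intro continuous_intros cont_csqrt_lin) auto
lemma cont_sB: "continuous_on UH sB"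
  unfolding sB_def by (intro continuous_intros cont_csqrt_lin) auto
lemma cont_sD: "0 < a \<Longrightarrow> continuous_on UH (sD a)"
  unfolding sD_def by (intro continuous_intros cont_csqrt_lin) auto
lemma hol_sA: "sA holomorphic_on OH"
  unfolding sA_def by (intro holomorphic_intros hol_csqrt_lin) auto
lemma hol_sB: "sB holomorphic_on OH"
  unfolding sB_def by (intro holomorphic_intros hol_csqrt_lin) auto
lemma hol_sD: "0 < a \<Longrightarrow> sD a holomorphic_on OH"
  unfolding sD_def by (intro holomorphic_intros hol_csqrt_lin) (auto simp: divide_pos_pos)

lemma cont_GG: assumes "0 < a" "0 < n" "0 < m" shows "continuous_on UH (GG n m a k)"
proof -
  have cA: "continuous_on UH sA" and cB: "continuous_on UH sB" and cD: "continuous_on UH (sD a)"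
    using cont_sA cont_sB cont_sD assms by auto
  have cp: "continuous_on UH pp" unfolding pp_def by (intro continuous_intros cA cB)
  have cq: "continuous_on UH (qq a)" unfolding qq_def sC_def by (intro continuous_intros cA cD) (use assms in auto)
  have cE: "continuous_on UH (EE n m a)" unfolding EE_def
    by (intro continuous_intros cp cq) (use qq_ne assms in auto)
  have cM: "continuous_on UH (MM n m a)" unfolding MM_def
    by (intro continuous_intros cp cq cA cB cD) (use qq_ne sB1_ne sD1_ne assms in auto)
  show ?thesis unfolding GG_def
    by (intro continuous_intros cM cE) (use EE_ne assms in auto)
qed

lemma hol_GG: assumes "0 < a" "0 < n" "0 < m" shows "GG n m a k holomorphic_on OH"
proof -
  have cA: "sA holomorphic_on OH" and cB: "sB holomorphic_on OH" and cD: "sD a holomorphic_on OH"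
    using hol_sA hol_sB hol_sD assms by auto
  have cp: "pp holomorphic_on OH" unfolding pp_def by (intro holomorphic_intros cA cB)
  have cq: "qq a holomorphic_on OH" unfolding qq_def sC_def by (intro holomorphic_intros cA cD) (use assms in auto)
  have cE: "EE n m a holomorphic_on OH" unfolding EE_def
    by (intro holomorphic_intros cp cq) (use qq_ne assms in auto)
  have cM: "MM n m a holomorphic_on OH" unfolding MM_def
    by (intro holomorphic_intros cp cq cA cB cD) (use qq_ne sB1_ne sD1_ne assms in auto)
  show ?thesis unfolding GG_def
    by (intro holomorphic_intros cM cE) (use EE_ne assms in auto)
qed



lemma norm_sA: "cmod (sA t) = sqrt (cmod t)"
  by (simp add: sA_def norm_mult norm_om)

lemma EE_big: assumes a: "0 < a" and t: "0 \<le> Im t" "cmod t = R" and R: "1 \<le> R" "a \<le> R"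
  shows "cmod (EE n m a t) \<le> a ^ m / R ^ (n + m)"
proof -
  have sR: "1 \<le> sqrt R" using R by simp
  have nA: "cmod (sA t) = sqrt R" using t by (simp add: norm_sA)
  define p' where "p' = sB t - \<i> * sA t"
  have p'eq: "p' = pp t - 2 * \<i> * sA t" unfolding p'_def pp_def by simp
  have one: "cmod (pp t) * cmod p' = 1" using pp_inv[of t] unfolding p'_def by (metis norm_mult norm_one)
  have "2 * sqrt R - cmod (pp t) \<le> cmod p'"
  proof -
    have "cmod (2 * \<i> * sA t) \<le> cmod p' + cmod (pp t)" unfolding p'eq
      by (metis add.commute diff_add_cancel norm_minus_commute norm_triangle_ineq4 norm_diff_triangle_ineq
          order_trans norm_triangle_ineq)
    thus ?thesis by (simp add: norm_mult nA)
  qed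
  hence p'1: "sqrt R \<le> cmod p'" using pp_le1[OF t(1)] sR by linarith
  have "sqrt R * cmod (pp t) \<le> 1" using mult_right_mono[OF p'1 norm_ge_zero[of "pp t"]] one by (simp add: mult.commute)
  hence pb: "cmod (pp t) \<le> 1 / sqrt R" using sR by (simp add: le_divide_eq mult.commute)
  have P: "cmod (pp t) ^ (2*n) \<le> 1 / R ^ n"
  proof -
    have "cmod (pp t) ^ (2*n) \<le> (1 / sqrt R) ^ (2*n)" using pb by (intro power_mono) auto
    also have "\<dots> = 1 / R ^ n" using R by (simp add: power_mult power_divide)
    finally show ?thesis .
  qed
  define q' where "q' = sD a t - sC a t"
  have q'eq: "q' = qq a t - 2 * sC a t" unfolding q'_def qq_def by simp
  have oneq: "cmod (qq a t) * cmod q' = 1" using qq_inv[OF a, of t] unfolding q'_def by (metis norm_mult norm_one)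
  have q'1: "cmod q' \<le> 1" using oneq qq_ge1[OF t(1) a]
    by (metis mult_le_cancel_right1 norm_ge_zero order_trans mult.commute less_le_not_le mult_less_cancel_left2)
  have nC: "cmod (sC a t) = sqrt R / sqrt a" using a nA by (simp add: sC_def norm_divide)
  have Ra: "1 \<le> sqrt R / sqrt a" using R a by (simp add: real_sqrt_le_mono)
  have "2 * (sqrt R / sqrt a) - cmod q' \<le> cmod (qq a t)"
  proof -
    have "cmod (2 * sC a t) \<le> cmod (qq a t) + cmod q'" unfolding q'eq
      by (metis add.commute diff_add_cancel norm_minus_commute norm_triangle_ineq4 norm_diff_triangle_ineq
          order_trans norm_triangle_ineq)
    thus ?thesis by (simp add: norm_mult nC)
  qed
  hence qb: "sqrt R / sqrt a \<le> cmod (qq a t)" using q'1 Ra by linarith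
  have Q: "(R / a) ^ m \<le> cmod (qq a t) ^ (2*m)"
  proof -
    have "(R / a) ^ m = (sqrt R / sqrt a) ^ (2*m)" using R a by (simp add: power_mult power_divide)
    also have "\<dots> \<le> cmod (qq a t) ^ (2*m)" using qb Ra by (intro power_mono) auto
    finally show ?thesis .
  qed
  have Rpos: "0 < R" using R by simp
  have "cmod (EE n m a t) = cmod (pp t) ^ (2*n) / cmod (qq a t) ^ (2*m)" by (rule EE_norm)
  also have "\<dots> \<le> (1 / R ^ n) / (R / a) ^ m"
    using P Q Rpos a by (intro frac_le) auto
  also have "\<dots> = a ^ m / R ^ (n + m)" using Rpos a by (simp add: power_add power_divide field_simps)
  finally show ?thesis .
qed



lemma H_bound: assumes a: "0 < a" and n: "0 < n" and m: "0 < m" and k: "k + 1 \<le> n + m"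
  and t: "0 \<le> Im t" "cmod t = R" and R: "2 \<le> R" "a \<le> R"
  shows "cmod (GG n m a k t + t ^ k / t) \<le> 16 * a ^ m / R ^ 2"
proof -
  define E where "E = EE n m a t"
  have Rp: "0 < R" using R by simp
  have t0: "t \<noteq> 0" using t Rp by auto
  have eb: "cmod E \<le> a ^ m / R ^ (n + m)" unfolding E_def by (rule EE_big[OF a t]) (use R in auto)
  have "a ^ m / R ^ (n + m) = (a / R) ^ m * (1 / R ^ n)" by (simp add: power_add power_divide)
  also have "\<dots> \<le> 1 * (1 / R)"
  proof (intro mult_mono)
    show "(a / R) ^ m \<le> 1" using a R by (intro power_le_one) auto
    have "R ^ 1 \<le> R ^ n" using R n by (intro power_increasing) auto
    thus "1 / R ^ n \<le> 1 / R" using Rp by (intro divide_left_mono) auto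
  qed (use a Rp in auto)
  also have "\<dots> \<le> 1 / 2" using R by simp
  finally have half: "cmod E \<le> 1 / 2" using eb by linarith
  have ne: "E + 1 \<noteq> 0" unfolding E_def by (rule EE_ne) (use t a n m in auto)
  have "GG n m a k t + t ^ k / t = (1 - ((E - 1) / (E + 1)) ^ 2) * (t ^ k / t)"
    unfolding GG_eq[OF t(1) a t0] E_def by (simp add: algebra_simps)
  also have "1 - ((E - 1) / (E + 1)) ^ 2 = 4 * E / (E + 1) ^ 2"
  proof -
    have y: "(E + 1) ^ 2 \<noteq> 0" using ne by simp
    have omd: "1 - x / w = (w - x) / w" if "w \<noteq> 0" for x w :: complex using that by (simp add: field_simps)
    have "1 - ((E - 1) / (E + 1)) ^ 2 = 1 - (E - 1) ^ 2 / (E + 1) ^ 2" by (simp only: power_divide)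
    also have "\<dots> = ((E + 1) ^ 2 - (E - 1) ^ 2) / (E + 1) ^ 2" by (rule omd[OF y])
    also have "(E + 1) ^ 2 - (E - 1) ^ 2 = 4 * E" by (simp add: power2_eq_square algebra_simps)
    finally show ?thesis .
  qed
  finally have eq: "GG n m a k t + t ^ k / t = 4 * E / (E + 1) ^ 2 * (t ^ k / t)" .
  have e1: "1 / 2 \<le> cmod (E + 1)"
  proof -
    have "1 \<le> cmod (E + 1) + cmod E"
      by (metis norm_one add_diff_cancel_left' norm_triangle_ineq4 add.commute diff_add_cancel norm_triangle_ineq order_trans norm_minus_commute)
    thus ?thesis using half by linarith
  qed
  have e2: "1 / 4 \<le> cmod ((E + 1) ^ 2)"
  proof -
    have "(1/2::real)^2 \<le> cmod (E + 1) ^ 2" by (rule power_mono[OF e1]) simp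
    moreover have "(1/2::real)^2 = 1/4" by (simp add: power2_eq_square)
    moreover have "cmod ((E + 1) ^ 2) = cmod (E + 1) ^ 2" by (rule norm_power)
    ultimately show ?thesis by linarith
  qed
  have f1: "cmod (4 * E / (E + 1) ^ 2) \<le> 16 * cmod E"
  proof -
    have "cmod (4 * E / (E + 1) ^ 2) = 4 * cmod E / cmod ((E + 1) ^ 2)" by (simp add: norm_divide norm_mult)
    also have "\<dots> \<le> 4 * cmod E / (1 / 4)" using e2 by (intro divide_left_mono) auto
    finally show ?thesis by simp
  qed
  have f2: "cmod (t ^ k / t) \<le> R ^ (n + m) / R ^ 2"
  proof -
    have "cmod (t ^ k / t) = R ^ (k + 1) / R ^ 2" using t Rp by (simp add: norm_divide norm_power power2_eq_square)
    also have "\<dots> \<le> R ^ (n + m) / R ^ 2" using R k by (intro divide_right_mono power_increasing) auto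
    finally show ?thesis .
  qed
  have "cmod (GG n m a k t + t ^ k / t) \<le> (16 * cmod E) * (R ^ (n + m) / R ^ 2)"
    unfolding eq norm_mult using f1 f2 by (intro mult_mono) auto
  also have "\<dots> \<le> (16 * (a ^ m / R ^ (n + m))) * (R ^ (n + m) / R ^ 2)"
    using eb Rp by (intro mult_right_mono) auto
  also have "\<dots> = 16 * a ^ m / R ^ 2" using Rp by (simp add: field_simps)
  finally show ?thesis .
qed

lemma A0: assumes "0 < R"
  shows "((\<lambda>t. - (t ^ 0 / t)) has_contour_integral (- \<i> * of_real pi)) (part_circlepath 0 R 0 pi)"
proof -
  have "((\<lambda>s. - \<i>) has_integral (- \<i> * of_real pi)) {0..pi}"
    using has_integral_const_real[of "- \<i>" 0 pi] by (simp add: scaleR_conv_of_real mult.commute)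
  moreover have "(\<lambda>s. - ((0 + of_real R * cis s) ^ 0 / (0 + of_real R * cis s)) * of_real R * \<i> * cis s) = (\<lambda>s. - \<i>)"
    using assms by (intro ext) (simp add: field_simps)
  ultimately show ?thesis by (subst has_contour_integral_part_circlepath_iff) auto
qed

lemma Ak: assumes "0 < R" "1 \<le> k"
  shows "\<exists>c::real. ((\<lambda>t. - (t ^ k / t)) has_contour_integral (of_real c)) (part_circlepath 0 R 0 pi)"
proof -
  have d: "((\<lambda>z. z ^ k / of_nat k) has_field_derivative z ^ (k - 1)) (at z within UNIV)" for z :: complex
    using assms(2) by (auto intro!: derivative_eq_intros)
  have "((\<lambda>z. z ^ (k - 1)) has_contour_integral
        ((\<lambda>z. z ^ k / of_nat k) (pathfinish (part_circlepath 0 R 0 pi)) - (\<lambda>z. z ^ k / of_nat k) (pathstart (part_circlepath 0 R 0 pi))))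
        (part_circlepath 0 R 0 pi)"
    by (rule contour_integral_primitive[OF d]) auto
  hence h: "((\<lambda>z. z ^ (k - 1)) has_contour_integral of_real (((- R) ^ k - R ^ k) / k)) (part_circlepath 0 R 0 pi)"
    by (simp add: exp_pi_i' diff_divide_distrib flip: cis_conv_exp)
  have "((\<lambda>t. - (t ^ k / t)) has_contour_integral - of_real (((- R) ^ k - R ^ k) / k)) (part_circlepath 0 R 0 pi)"
  proof (rule has_contour_integral_eq[OF has_contour_integral_neg[OF h]])
    fix x assume "x \<in> path_image (part_circlepath 0 R 0 pi)"
    hence "cmod x = R" using assms(1) path_image_part_circlepath_subset[of 0 pi R 0] by auto
    hence "x \<noteq> 0" using assms(1) by auto
    moreover obtain j where "k = Suc j" using assms(2) by (cases k) auto
    ultimately show "- (x ^ (k - 1)) = - (x ^ k / x)" by simp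
  qed
  thus ?thesis by (metis of_real_minus)
qed



lemma interior_sub_OH: assumes "x \<in> interior (S \<inter> UH)" shows "0 < Im x"
proof (rule ccontr)
  assume "\<not> 0 < Im x"
  have "x \<in> interior UH" using assms interior_mono[of "S \<inter> UH" UH] by blast
  then obtain e where e: "0 < e" "ball x e \<subseteq> UH" by (auto simp: mem_interior)
  have "x - \<i> * of_real (e / 2) \<in> ball x e" using e(1) by (simp add: dist_norm norm_mult)
  hence "x - \<i> * of_real (e / 2) \<in> UH" using e(2) by blast
  hence "0 \<le> Im (x - \<i> * of_real (e / 2))" by simp
  with \<open>\<not> 0 < Im x\<close> e(1) show False by simp
qed

lemma small_zero: fixes d K R0 :: real
  assumes "0 < R0" "\<And>R. R0 \<le> R \<Longrightarrow> \<bar>d\<bar> \<le> K / R" shows "d = 0"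
proof (rule ccontr)
  assume d: "d \<noteq> 0"
  define R where "R = max R0 (2 * \<bar>K\<bar> / \<bar>d\<bar> + 1)"
  have R0: "R0 \<le> R" "0 < R" using assms(1) unfolding R_def by auto
  have "2 * \<bar>K\<bar> / \<bar>d\<bar> < R" unfolding R_def by linarith
  hence "2 * \<bar>K\<bar> < R * \<bar>d\<bar>" using d by (simp add: divide_less_eq)
  hence "\<bar>K\<bar> / R < \<bar>d\<bar>" using R0(2) d by (simp add: divide_less_eq mult.commute)
  moreover have "K / R \<le> \<bar>K\<bar> / R" using R0(2) by (simp add: divide_right_mono)
  ultimately show False using assms(2)[OF R0(1)] by linarith
qed

lemma seg_in: assumes "z \<in> closed_segment (complex_of_real (-R)) (complex_of_real R)" "0 \<le> R"
  shows "Im z = 0" "cmod z \<le> R"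
proof -
  obtain u where u: "0 \<le> u" "u \<le> 1" "z = (1 - u) *\<^sub>R complex_of_real (-R) + u *\<^sub>R complex_of_real R"
    using assms(1) by (auto simp: in_segment)
  hence z: "z = of_real ((2 * u - 1) * R)" by (simp add: scaleR_conv_of_real algebra_simps)
  show "Im z = 0" using z by simp
  have "\<bar>2 * u - 1\<bar> \<le> 1" using u by auto
  hence "\<bar>(2 * u - 1) * R\<bar> \<le> R" using assms(2) by (simp add: abs_mult mult_left_le_one_le)
  moreover have "cmod z = \<bar>(2 * u - 1) * R\<bar>" unfolding z by (rule norm_of_real)
  ultimately show "cmod z \<le> R" by simp
qed

lemma arc_in: assumes "z \<in> path_image (part_circlepath 0 R 0 pi)" "0 \<le> R"
  shows "0 \<le> Im z" "cmod z = R"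
proof -
  obtain s where s: "0 \<le> s" "s \<le> pi" "z = 0 + of_real R * exp (\<i> * of_real s)"
    using assms(1) by (auto simp: path_image_part_circlepath)
  hence "z = of_real R * cis s" by (simp add: cis_conv_exp)
  thus "0 \<le> Im z" "cmod z = R" using s assms(2) by (auto simp: sin_ge_zero norm_mult)
qed



lemma arc_step:
  assumes a: "0 < a" and n: "0 < n" and m: "0 < m" and k: "k + 1 \<le> n + m"
    and R: "2 \<le> R" "a \<le> R"
    and hV: "((\<lambda>x. Im (GG n m a k (of_real x))) has_integral V) {-a..1}"
  shows "\<bar>V - (if k = 0 then pi else 0)\<bar> \<le> 16 * a ^ m * pi / R"
proof -
  define G where "G = GG n m a k"
  define h where "h = (\<lambda>x. Im (G (of_real x)))"
  have Rp: "0 < R" using R by simp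
  define S where "S = cball 0 R \<inter> UH"
  define g1 where "g1 = linepath (complex_of_real (-R)) (complex_of_real R)"
  define g2 where "g2 = part_circlepath 0 R 0 pi"
  have cG: "continuous_on UH G" unfolding G_def by (rule cont_GG[OF a n m])
  have hG: "G holomorphic_on OH" unfolding G_def by (rule hol_GG[OF a n m])
  have fin12: "pathfinish g1 = pathstart g2" unfolding g1_def g2_def by simp
  have fin21: "pathfinish g2 = pathstart g1" unfolding g1_def g2_def by (simp add: exp_pi_i' flip: cis_conv_exp)
  have v1: "valid_path g1" and v2: "valid_path g2" unfolding g1_def g2_def by auto
  have pi1: "path_image g1 \<subseteq> S"
  proof
    fix z assume "z \<in> path_image g1"
    hence "z \<in> closed_segment (complex_of_real (-R)) (complex_of_real R)" unfolding g1_def by simp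
    thus "z \<in> S" using seg_in[of z R] Rp unfolding S_def by auto
  qed
  have pi2: "path_image g2 \<subseteq> S"
  proof
    fix z assume "z \<in> path_image g2"
    thus "z \<in> S" using arc_in[of z R] Rp unfolding S_def g2_def by auto
  qed
  have SU: "S \<subseteq> UH" unfolding S_def by auto
  have cauchy: "(G has_contour_integral 0) (g1 +++ g2)"
  proof (rule Cauchy_theorem_convex[where K = "{}"])
    show "continuous_on S G" using cG SU by (rule continuous_on_subset)
    show "convex S" unfolding S_def by (intro convex_Int convex_cball convex_halfspace_Im_ge)
    show "G field_differentiable at x" if "x \<in> interior S - {}" for x
    proof -
      have "0 < Im x" using that interior_sub_OH[of x "cball 0 R"] unfolding S_def by auto
      thus ?thesis using holomorphic_on_imp_differentiable_at[OF hG open_halfspace_Im_gt] by auto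
    qed
    show "valid_path (g1 +++ g2)" using v1 v2 fin12 by (rule valid_path_join)
    show "path_image (g1 +++ g2) \<subseteq> S" using pi1 pi2 path_image_join[OF fin12] by auto
    show "pathfinish (g1 +++ g2) = pathstart (g1 +++ g2)" using fin21 by simp
  qed simp
  have ci1: "G contour_integrable_on g1" unfolding g1_def
    by (rule contour_integrable_continuous_linepath, rule continuous_on_subset[OF cG])
       (use pi1 SU g1_def in auto)
  have ci2: "G contour_integrable_on g2" unfolding g2_def
    by (rule contour_integrable_continuous_part_circlepath, rule continuous_on_subset[OF cG])
       (use pi2 SU g2_def in auto)
  define L where "L = contour_integral g1 G"
  define C where "C = contour_integral g2 G"
  have hL: "(G has_contour_integral L) g1" unfolding L_def using ci1 by (rule has_contour_integral_integral)
  have hC: "(G has_contour_integral C) g2" unfolding C_def using ci2 by (rule has_contour_integral_integral)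
  have LC: "L + C = 0"
    using has_contour_integral_unique[OF has_contour_integral_join[OF hL hC v1 v2] cauchy] .
  have "((\<lambda>x. G (of_real x)) has_integral L) {-R..R}"
    using hL unfolding g1_def using Rp by (subst (asm) has_contour_integral_linepath_Reals_iff) auto
  hence hL': "(h has_integral Im L) {-R..R}" unfolding h_def by (rule has_integral_Im)
  have hV': "(h has_integral V) {-a..1}" using hV unfolding h_def G_def .
  have z1: "(h has_integral 0) {-R..-a}"
    by (rule has_integral_is_0) (use ImGG_out[OF a n m] in \<open>auto simp: h_def G_def\<close>)
  have z2: "(h has_integral 0) {1..R}"
    by (rule has_integral_is_0) (use ImGG_out[OF a n m] in \<open>auto simp: h_def G_def\<close>)
  have c1: "(h has_integral (0 + V)) {-R..1}" by (rule has_integral_combine[OF _ _ z1 hV']) (use R a in auto)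
  have "(h has_integral (0 + V + 0)) {-R..R}" by (rule has_integral_combine[OF _ _ c1 z2]) (use R in auto)
  hence VL: "V = Im L" using hL' by (simp add: has_integral_unique)
  obtain Aval where hA: "((\<lambda>t. - (t ^ k / t)) has_contour_integral Aval) g2"
      and ImA: "Im Aval = - (if k = 0 then pi else 0)"
  proof (cases "k = 0")
    case True
    show ?thesis by (rule that[of "- \<i> * of_real pi"]) (use A0[OF Rp] True g2_def in auto)
  next
    case False
    then obtain c :: real where "((\<lambda>t. - (t ^ k / t)) has_contour_integral of_real c) g2"
      using Ak[OF Rp, of k] unfolding g2_def by auto
    thus ?thesis using False by (intro that) auto
  qed
  have hH: "((\<lambda>t. G t - - (t ^ k / t)) has_contour_integral (C - Aval)) g2"
    by (rule has_contour_integral_diff[OF hC hA])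
  have bnd: "cmod (C - Aval) \<le> 16 * a ^ m / R ^ 2 * R * (pi - 0)"
  proof (rule has_contour_integral_bound_part_circlepath[OF hH[unfolded g2_def]])
    show "0 \<le> 16 * a ^ m / R ^ 2" using a by simp
    show "0 < R" by (rule Rp)
    show "0 \<le> pi" by simp
    fix x assume "x \<in> path_image (part_circlepath 0 R 0 pi)"
    hence x1: "0 \<le> Im x" and x2: "cmod x = R" using arc_in[of x R] Rp by auto
    show "cmod (G x - - (x ^ k / x)) \<le> 16 * a ^ m / R ^ 2"
      using H_bound[OF a n m k x1 x2 R] unfolding G_def diff_minus_eq_add .
  qed
  have "L = - C" using LC by (simp add: eq_neg_iff_add_eq_0)
  hence "Im L = - Im C" by simp
  hence "V - (if k = 0 then pi else 0) = - Im (C - Aval)" using VL ImA by simp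
  hence "\<bar>V - (if k = 0 then pi else 0)\<bar> \<le> cmod (C - Aval)" using abs_Im_le_cmod[of "C - Aval"] by simp
  also have "\<dots> \<le> 16 * a ^ m / R ^ 2 * R * (pi - 0)" by (rule bnd)
  also have "\<dots> = 16 * a ^ m * pi / R" using Rp by (simp add: power2_eq_square field_simps)
  finally show ?thesis .
qed



lemma main_k: assumes a: "0 < a" and n: "0 < n" and m: "0 < m" and k: "k + 1 \<le> n + m"
  shows "((\<lambda>x. Im (GG n m a k (of_real x))) has_integral (if k = 0 then pi else 0)) {-a..1}"
proof -
  have c: "continuous_on {-a..1} (\<lambda>x. GG n m a k (of_real x))"
    by (rule continuous_on_compose2[OF cont_GG[OF a n m] continuous_on_of_real]) auto
  have "continuous_on {-a..1} (\<lambda>x. Im (GG n m a k (of_real x)))"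
    using continuous_on_Im[OF c] .
  hence hV: "((\<lambda>x. Im (GG n m a k (of_real x))) has_integral
             integral {-a..1} (\<lambda>x. Im (GG n m a k (of_real x)))) {-a..1}"
    by (intro integrable_integral integrable_continuous_real)
  define V where "V = integral {-a..1} (\<lambda>x. Im (GG n m a k (of_real x)))"
  have "V - (if k = 0 then pi else 0) = 0"
  proof (rule small_zero[of "max 2 a"])
    show "0 < max 2 a" by simp
    fix R assume "max 2 a \<le> R"
    thus "\<bar>V - (if k = 0 then pi else 0)\<bar> \<le> 16 * a ^ m * pi / R"
      using arc_step[OF a n m k _ _ hV[folded V_def]] by auto
  qed
  thus ?thesis using hV[folded V_def] by simp
qed

theorem mainTheorem5:
  fixes n m :: nat and a :: real and j :: int
  assumes "0 < n" and "0 < m" and "0 < a"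
    and "j = -1 \<or> (0 \<le> j \<and> j \<le> int n + int m - 2)"
  shows "((\<lambda>t. numer n m a t / (denom n m a t)\<^sup>2 * t powi j) has_integral
           (if j = -1 then pi / 2 else 0)) {-a..1}"
proof -
  define k where "k = nat (j + 1)"
  have jk: "j = int k - 1" unfolding k_def using assms(4) by auto
  have k: "k + 1 \<le> n + m" unfolding k_def using assms(1,2,4) by auto
  have k0: "(k = 0) = (j = -1)" unfolding k_def using assms(4) by auto
  have h: "((\<lambda>x. Im (GG n m a k (of_real x))) has_integral (if k = 0 then pi else 0)) {-a..1}"
    by (rule main_k[OF assms(3,1,2) k])
  hence h2: "((\<lambda>x. Im (GG n m a k (of_real x)) / 2) has_integral (if k = 0 then pi else 0) / 2) {-a..1}"
    by (rule has_integral_divide)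
  show ?thesis
  proof (rule has_integral_spike_finite[of "{0}"])
    show "finite {0::real}" by simp
    fix x assume x: "x \<in> {-a..1} - {0}"
    hence "x \<noteq> 0" "-a \<le> x" "x \<le> 1" by auto
    thus "numer n m a x / (denom n m a x)\<^sup>2 * x powi j = Im (GG n m a k (of_real x)) / 2"
      using ImGG_seg[OF assms(3,1,2), of x k] powi_eq[of x k] jk by simp
  next
    show "((\<lambda>x. Im (GG n m a k (of_real x)) / 2) has_integral (if j = -1 then pi / 2 else 0)) {-a..1}"
      using h2 k0 by (simp split: if_splits)
  qed
qed


end
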